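(* Let $k$ be an algebraically closed field and let $A$ be a connected basic finite dimensional $k$-algebra which does not have a non-trivial grading. Then the (Gabriel) quiver of $A$ has exactly one vertex.
   Context: A grading on $A$ is a decomposition $A=\bigoplus_{i\in\mathbb{Z}}A_i$ into subspaces with $A_iA_j\subseteq A_{i+j}$ for all $i,j\in\mathbb{Z}$. The trivial grading is $A_0=A$; a grading is non-trivial if $A_i\neq 0$ for some $i\neq 0$. Here "$A$ has a non-trivial grading" means there is a non-trivial grading on an algebra isomorphic to $A$. Connected means $A$ is indecomposable as an algebra. *)

theory Defs
  imports Main "HOL-Computational_Algebra.Polynomial"
begin

definition alg_closed :: "'k::field itself \<Rightarrow> bool" where
  "alg_closed _ \<longleftrightarrow> (\<forall>p :: 'k poly. degree p \<ge> 1 \<longrightarrow> (\<exists>x. poly p x = 0))"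

definition fd_algebra :: "('k::field \<Rightarrow> 'a::ring_1 \<Rightarrow> 'a) \<Rightarrow> bool" where
  "fd_algebra scale \<longleftrightarrow> vector_space scale
     \<and> (\<forall>c x y. scale c (x * y) = scale c x * y \<and> scale c (x * y) = x * scale c y)
     \<and> (\<exists>B. finite B \<and> module.span scale B = UNIV)"

definition idempotent :: "'a::ring_1 \<Rightarrow> bool" where
  "idempotent e \<longleftrightarrow> e * e = e"

text \<open>Connected = indecomposable as an algebra: A is nonzero and has no central
  idempotents other than 0 and 1.\<close>
definition connected_alg :: "'a::ring_1 itself \<Rightarrow> bool" where
  "connected_alg _ \<longleftrightarrow> (0::'a) \<noteq> 1 \<and>
     (\<forall>e::'a. idempotent e \<and> (\<forall>x. e * x = x * e) \<longrightarrow> e = 0 \<or> e = 1)"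

definition primitive_idem :: "'a::ring_1 \<Rightarrow> bool" where
  "primitive_idem e \<longleftrightarrow> idempotent e \<and> e \<noteq> 0 \<and>
     (\<forall>e1 e2. idempotent e1 \<and> idempotent e2 \<and> e1 * e2 = 0 \<and> e2 * e1 = 0 \<and> e = e1 + e2
        \<longrightarrow> e1 = 0 \<or> e2 = 0)"

definition complete_prim_orth_idems :: "'a::ring_1 set \<Rightarrow> bool" where
  "complete_prim_orth_idems E \<longleftrightarrow> finite E \<and> (\<forall>e\<in>E. primitive_idem e) \<and>
     (\<forall>e\<in>E. \<forall>f\<in>E. e \<noteq> f \<longrightarrow> e * f = 0) \<and> sum id E = 1"

definition right_ideal_gen :: "'a::ring_1 \<Rightarrow> 'a set" where
  "right_ideal_gen e = {e * x | x. True}"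

definition right_mod_iso :: "'a::ring_1 \<Rightarrow> 'a \<Rightarrow> bool" where
  "right_mod_iso e f \<longleftrightarrow> (\<exists>\<phi>. bij_betw \<phi> (right_ideal_gen e) (right_ideal_gen f) \<and>
     (\<forall>m\<in>right_ideal_gen e. \<forall>n\<in>right_ideal_gen e. \<phi> (m + n) = \<phi> m + \<phi> n) \<and>
     (\<forall>m\<in>right_ideal_gen e. \<forall>a. \<phi> (m * a) = \<phi> m * a))"

definition basic_alg :: "'a::ring_1 itself \<Rightarrow> bool" where
  "basic_alg _ \<longleftrightarrow> (\<forall>E::'a set. complete_prim_orth_idems E \<longrightarrow>
     (\<forall>e\<in>E. \<forall>f\<in>E. e \<noteq> f \<longrightarrow> \<not> right_mod_iso e f))"

text \<open>Vertices of the (Gabriel) quiver of A, computed from a complete set E of primitive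
  orthogonal idempotents: isoclasses of the indecomposable projectives eA, e in E
  (equivalently, isoclasses of simple A-modules).\<close>
definition quiver_vertices :: "'a::ring_1 set \<Rightarrow> 'a set set" where
  "quiver_vertices E = E // {(e, f). e \<in> E \<and> f \<in> E \<and> right_mod_iso e f}"

definition is_grading :: "('k::field \<Rightarrow> 'a::ring_1 \<Rightarrow> 'a) \<Rightarrow> (int \<Rightarrow> 'a set) \<Rightarrow> bool" where
  "is_grading scale G \<longleftrightarrow>
     (\<forall>i. module.subspace scale (G i)) \<and>
     (\<forall>x. \<exists>!c :: int \<Rightarrow> 'a. finite {i. c i \<noteq> 0} \<and> (\<forall>i. c i \<in> G i) \<and>
            x = sum c {i. c i \<noteq> 0}) \<and>
     (\<forall>i j x y. x \<in> G i \<longrightarrow> y \<in> G j \<longrightarrow> x * y \<in> G (i + j))"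

definition has_nontrivial_grading :: "('k::field \<Rightarrow> 'a::ring_1 \<Rightarrow> 'a) \<Rightarrow> bool" where
  "has_nontrivial_grading scale \<longleftrightarrow>
     (\<exists>G. is_grading scale G \<and> (\<exists>i. i \<noteq> 0 \<and> G i \<noteq> {0}))"

end

theory Submission
  imports Defs
begin

definition prj :: "'a::ring_1 \<Rightarrow> int \<Rightarrow> 'a \<Rightarrow> 'a" where
  "prj e i y = (if i = 0 then e*y*e + (1-e)*y*(1-e) else if i = 1 then e*y*(1-e)
     else if i = -1 then (1-e)*y*e else 0)"

lemma idem_facts:
  fixes e :: "'a::ring_1"
  assumes "e*e = e"
  shows "e*(1-e) = 0" "(1-e)*e = 0" "(1-e)*(1-e) = 1-e"
  using assms by (simp_all add: algebra_simps)

lemma prj_f: "prj e i y = (if i = 0 then e*y*e + f*y*f else if i = 1 then e*y*f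
     else if i = -1 then f*y*e else 0)" if "f = 1 - e"
  using that unfolding prj_def by simp

lemma prj_prj:
  fixes e :: "'a::ring_1"
  assumes "e*e = e"
  shows "prj e i (prj e j y) = (if i = j then prj e j y else 0)"
proof -
  define f where "f = 1 - e"
  have R: "e*e=e" "e*(e*z)=e*z" "e*f=0" "e*(f*z)=0" "f*e=0" "f*(e*z)=0" "f*f=f" "f*(f*z)=f*z" for z
    using assms unfolding f_def by (simp_all add: algebra_simps mult.assoc[symmetric])
  show ?thesis
    unfolding prj_f[OF f_def] by (auto simp: distrib_left distrib_right mult.assoc R)
qed

lemma prj_sum:
  fixes e :: "'a::ring_1"
  shows "prj e (-1) y + prj e 0 y + prj e 1 y = y"
proof -
  have "y = (e + (1-e)) * y * (e + (1-e))" by simp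
  also have "\<dots> = e*y*e + (1-e)*y*(1-e) + e*y*(1-e) + (1-e)*y*e"
    by (simp only: distrib_left distrib_right) (simp add: algebra_simps)
  finally show ?thesis unfolding prj_def by (simp add: algebra_simps)
qed

lemma prj_add: "prj e i (x + y) = prj e i x + prj e i (y::'a::ring_1)"
  unfolding prj_def by (simp add: algebra_simps)

lemma prj_sumset: "finite S \<Longrightarrow> prj e i (sum c S) = (\<Sum>j\<in>S. prj e i (c j::'a::ring_1))"
  by (induction S rule: finite_induct) (simp_all add: prj_add, simp add: prj_def)

lemma prj_mult:
  fixes e :: "'a::ring_1"
  assumes "e*e = e" "prj e i x = x" "prj e j y = y"
  shows "prj e (i+j) (x*y) = x*y"
proof -
  note I = idem_facts[OF assms(1)]
  have z: "\<And>i x. i \<notin> {-1,0,1} \<Longrightarrow> prj e i x = 0" unfolding prj_def by auto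
  consider "i \<notin> {-1,0,1}" | "j \<notin> {-1,0,1}" | "i \<in> {-1,0,1}" "j \<in> {-1,0,1}" by blast
  then show ?thesis
  proof cases
    case 1 then have "x = 0" using assms(2) z by metis
    then show ?thesis unfolding prj_def by simp
  next
    case 2 then have "y = 0" using assms(3) z by metis
    then show ?thesis unfolding prj_def by simp
  next
    case 3
    obtain x' where x': "x = prj e i x'" using assms(2) by metis
    obtain y' where y': "y = prj e j y'" using assms(3) by metis
    define f where "f = 1 - e"
    have R: "e*e=e" "e*(e*z)=e*z" "e*f=0" "e*(f*z)=0" "f*e=0" "f*(e*z)=0" "f*f=f" "f*(f*z)=f*z" for z
      using assms unfolding f_def by (simp_all add: algebra_simps mult.assoc[symmetric])
    have mm: "x*y = prj e (i+j) (x*y)"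
      using 3 unfolding x' y' prj_f[OF f_def]
      by (auto simp: distrib_left distrib_right mult.assoc R)
    then show ?thesis by simp
  qed
qed

lemma central_if_no_grading:
  fixes scale :: "'k::field \<Rightarrow> 'a::ring_1 \<Rightarrow> 'a" and e :: 'a
  assumes fd: "fd_algebra scale" and ng: "\<not> has_nontrivial_grading scale"
    and ee: "e*e = e"
  shows "\<forall>x. e*x = x*e"
proof -
  interpret vector_space scale using fd unfolding fd_algebra_def by blast
  have comp: "\<forall>c x y. scale c (x * y) = scale c x * y \<and> scale c (x * y) = x * scale c y"
    using fd unfolding fd_algebra_def by blast
  define G where "G = (\<lambda>i. {y. prj e i y = y})"
  have sc: "prj e i (scale c y) = scale c (prj e i y)" for i c y
  proof -
    have s3: "scale c (a*y*b) = a*scale c y*b" for a b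
      using comp by metis
    show ?thesis unfolding prj_def by (simp add: s3 scale_right_distrib)
  qed
  have gr: "is_grading scale G"
    unfolding is_grading_def
  proof (intro conjI allI impI)
    fix i show "subspace (G i)"
      by (rule subspaceI) (auto simp: G_def prj_add sc, simp add: prj_def)
  next
    fix i j x y assume "x \<in> G i" "y \<in> G j"
    then show "x*y \<in> G (i+j)" using prj_mult[OF ee] by (auto simp: G_def)
  next
    fix x
    have z: "\<And>i x. i \<notin> {-1,0,1} \<Longrightarrow> prj e i x = 0" unfolding prj_def by auto
    define c where "c = (\<lambda>i. prj e i x)"
    have supp: "{i. c i \<noteq> 0} \<subseteq> {-1,0,1}" using z unfolding c_def by blast
    have fin: "finite {i. c i \<noteq> 0}" using supp finite_subset by blast
    have "sum c {i. c i \<noteq> 0} = sum c {-1,0,1}"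
      by (rule sum.mono_neutral_left) (use supp in auto)
    also have "\<dots> = x" using prj_sum[of e x] by (simp add: c_def add.assoc)
    finally have ex: "finite {i. c i \<noteq> 0} \<and> (\<forall>i. c i \<in> G i) \<and> x = sum c {i. c i \<noteq> 0}"
      using fin by (simp add: G_def c_def prj_prj[OF ee])
    show "\<exists>!c. finite {i. c i \<noteq> 0} \<and> (\<forall>i. c i \<in> G i) \<and> x = sum c {i. c i \<noteq> 0}"
    proof (rule ex1I[of _ c])
      show "finite {i. c i \<noteq> 0} \<and> (\<forall>i. c i \<in> G i) \<and> x = sum c {i. c i \<noteq> 0}" by (rule ex)
    next
      fix d assume d: "finite {i. d i \<noteq> 0} \<and> (\<forall>i. d i \<in> G i) \<and> x = sum d {i. d i \<noteq> 0}"
      show "d = c"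
      proof
        fix j
        have dj: "prj e j (d i) = (if i = j then d i else 0)" for i
          using d prj_prj[OF ee, of j i] by (auto simp: G_def) (metis)
        have "c j = (\<Sum>i\<in>{i. d i \<noteq> 0}. prj e j (d i))"
          using d prj_sumset unfolding c_def by metis
        also have "\<dots> = (\<Sum>i\<in>{i. d i \<noteq> 0}. if i = j then d i else 0)" by (simp add: dj)
        also have "\<dots> = d j" by (simp add: sum.delta[OF conjunct1[OF d]])
        finally show "d j = c j" by simp
      qed
    qed
  qed
  then have triv: "\<forall>i. i \<noteq> 0 \<longrightarrow> G i = {0}" using ng unfolding has_nontrivial_grading_def by blast
  have p1: "e*y*(1-e) = 0" for y
  proof -
    have "prj e 1 y \<in> G 1" unfolding G_def by (simp add: prj_prj[OF ee])
    then show ?thesis using triv by (auto simp: prj_def)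
  qed
  have p2: "(1-e)*y*e = 0" for y
  proof -
    have "prj e (-1) y \<in> G (-1)" unfolding G_def by (simp add: prj_prj[OF ee])
    then show ?thesis using triv by (auto simp: prj_def)
  qed
  show ?thesis
  proof
    fix x
    have "e*x = e*x*(e + (1-e))" by simp
    also have "\<dots> = e*x*e + e*x*(1-e)" by (rule distrib_left)
    finally have a: "e*x = e*x*e" using p1[of x] by simp
    have "x*e = (e + (1-e))*x*e" by simp
    also have "\<dots> = e*x*e + (1-e)*x*e" by (simp only: distrib_right)
    finally have "x*e = e*x*e" using p2[of x] by simp
    with a show "e*x = x*e" by simp
  qed
qed

theorem mainTheorem2:
  fixes scale :: "'k::field \<Rightarrow> 'a::ring_1 \<Rightarrow> 'a"
  assumes "alg_closed TYPE('k)"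
    and "fd_algebra scale"
    and "connected_alg TYPE('a)"
    and "basic_alg TYPE('a)"
    and "\<not> has_nontrivial_grading scale"
  shows "\<forall>E::'a set. complete_prim_orth_idems E \<longrightarrow> card (quiver_vertices E) = 1"
proof (intro allI impI)
  fix E :: "'a set" assume E: "complete_prim_orth_idems E"
  have con: "(0::'a) \<noteq> 1" "\<And>e::'a. idempotent e \<and> (\<forall>x. e * x = x * e) \<Longrightarrow> e = 0 \<or> e = 1"
    using assms(3) unfolding connected_alg_def by blast+
  have "E \<noteq> {}" using E con(1) unfolding complete_prim_orth_idems_def by auto
  then obtain e where eE: "e \<in> E" by blast
  have single: "E = {e}"
  proof (rule ccontr)
    assume "E \<noteq> {e}"
    then obtain g where g: "g \<in> E" "g \<noteq> e" using eE by blast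
    have pe: "primitive_idem e" "primitive_idem g" "e*g = 0"
      using E eE g unfolding complete_prim_orth_idems_def by auto
    have ee: "e*e = e" using pe unfolding primitive_idem_def idempotent_def by blast
    have "\<forall>x. e*x = x*e" using central_if_no_grading[OF assms(2) assms(5) ee] .
    then have "e = 0 \<or> e = 1" using con(2) ee unfolding idempotent_def by blast
    then show False using pe unfolding primitive_idem_def by auto
  qed
  show "card (quiver_vertices E) = 1"
    unfolding quiver_vertices_def single quotient_def by simp
qed

end
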